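(* Let $X$ be a spectral space. The map $\varphi':X^{\mathrm{inv}}\to\mathcal X'(X)^{\mathrm{zar}}$, $x\mapsto \mathrm{Cl}(\{x\})$, is a topological embedding.
   Context: For a spectral space $X$, $\mathrm{Cl}$ denotes closure in its given topology, and $X^{\mathrm{inv}}$ is $X$ with the inverse topology, i.e. the topology having the quasi-compact open subsets of $X$ as a basis of closed sets. $\mathcal X'(X)$ is the set of nonempty closed subsets of $X$; its Zariski topology has as basis of open sets the sets $\mathcal U'(\Omega):=\{Y\in\mathcal X'(X)\mid Y\cap\Omega=\emptyset\}$, where $\Omega$ ranges over quasi-compact open subsets of $X$. *)

theory Defs
  imports "HOL-Analysis.Analysis"
begin

definition qc_open :: "'a topology \<Rightarrow> 'a set \<Rightarrow> bool" where
  "qc_open X U \<longleftrightarrow> openin X U \<and> compactin X U"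

definition irreducible_closed :: "'a topology \<Rightarrow> 'a set \<Rightarrow> bool" where
  "irreducible_closed X C \<longleftrightarrow> closedin X C \<and> C \<noteq> {} \<and>
     (\<forall>A B. closedin X A \<and> closedin X B \<and> C \<subseteq> A \<union> B \<longrightarrow> C \<subseteq> A \<or> C \<subseteq> B)"

definition sober_space :: "'a topology \<Rightarrow> bool" where
  "sober_space X \<longleftrightarrow> (\<forall>C. irreducible_closed X C \<longrightarrow>
     (\<exists>!x. x \<in> topspace X \<and> C = X closure_of {x}))"

definition spectral_space :: "'a topology \<Rightarrow> bool" where
  "spectral_space X \<longleftrightarrow> compact_space X \<and> sober_space X \<and>
     (\<forall>U V. qc_open X U \<and> qc_open X V \<longrightarrow> qc_open X (U \<inter> V)) \<and>
     (\<forall>W x. openin X W \<and> x \<in> W \<longrightarrow> (\<exists>U. qc_open X U \<and> x \<in> U \<and> U \<subseteq> W))"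

definition inverse_topology :: "'a topology \<Rightarrow> 'a topology" where
  "inverse_topology X = topology_generated_by {topspace X - U | U. qc_open X U}"

definition nonempty_closed :: "'a topology \<Rightarrow> 'a set set" where
  "nonempty_closed X = {Y. closedin X Y \<and> Y \<noteq> {}}"

definition zar_basic :: "'a topology \<Rightarrow> 'a set \<Rightarrow> 'a set set" where
  "zar_basic X \<Omega> = {Y \<in> nonempty_closed X. Y \<inter> \<Omega> = {}}"

definition zariski_closed_sets :: "'a topology \<Rightarrow> 'a set topology" where
  "zariski_closed_sets X = topology_generated_by {zar_basic X \<Omega> | \<Omega>. qc_open X \<Omega>}"

end

theory Submission
  imports Defs
begin

lemma sober_inj:
  assumes "sober_space X" "x \<in> topspace X" "y \<in> topspace X"
    "X closure_of {x} = X closure_of {y}"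
  shows "x = y"
proof -
  have xin: "x \<in> X closure_of {x}" using assms(2) closure_of_subset[of "{x}" X] by blast
  have irr: "irreducible_closed X (X closure_of {x})"
    unfolding irreducible_closed_def
  proof (intro conjI allI impI)
    show "closedin X (X closure_of {x})" by simp
    show "X closure_of {x} \<noteq> {}" using xin by blast
  next
    fix A B assume h: "closedin X A \<and> closedin X B \<and> X closure_of {x} \<subseteq> A \<union> B"
    then have "x \<in> A \<or> x \<in> B" using xin by blast
    then show "X closure_of {x} \<subseteq> A \<or> X closure_of {x} \<subseteq> B"
    proof
      assume "x \<in> A" then show ?thesis using h closure_of_minimal[of "{x}" A X] by blast
    next
      assume "x \<in> B" then show ?thesis using h closure_of_minimal[of "{x}" B X] by blast
    qed
  qed
  have "\<exists>!z. z \<in> topspace X \<and> X closure_of {x} = X closure_of {z}"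
    using irr assms(1) unfolding sober_space_def by blast
  then show ?thesis using assms(2,3,4) by blast
qed

lemma topspace_inv: "topspace (inverse_topology X) = topspace X"
proof -
  have "qc_open X {}" unfolding qc_open_def by simp
  then have "topspace X \<in> {topspace X - U | U. qc_open X U}" by blast
  then show ?thesis unfolding inverse_topology_def by auto
qed

lemma topspace_zar: "topspace (zariski_closed_sets X) = nonempty_closed X"
proof -
  have "qc_open X {}" unfolding qc_open_def by simp
  moreover have "zar_basic X {} = nonempty_closed X" unfolding zar_basic_def by auto
  ultimately have "nonempty_closed X \<in> {zar_basic X \<Omega> | \<Omega>. qc_open X \<Omega>}" by force
  moreover have "\<And>\<Omega>. zar_basic X \<Omega> \<subseteq> nonempty_closed X" unfolding zar_basic_def by auto
  ultimately show ?thesis unfolding zariski_closed_sets_def by auto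
qed

lemma cl_meet:
  assumes "openin X \<Omega>" "x \<in> topspace X"
  shows "X closure_of {x} \<inter> \<Omega> = {} \<longleftrightarrow> x \<notin> \<Omega>"
  using openin_Int_closure_of_eq_empty[OF assms(1), of "{x}"] by blast

theorem mainTheorem14:
  fixes X :: "'a topology"
  assumes "spectral_space X"
  shows "embedding_map (inverse_topology X) (zariski_closed_sets X) (\<lambda>x. X closure_of {x})"
proof -
  define f where "f = (\<lambda>x. X closure_of {x})"
  define T where "T = topspace X"
  have sob: "sober_space X" using assms unfolding spectral_space_def by blast
  have inj: "inj_on f T" unfolding inj_on_def f_def T_def using sober_inj[OF sob] by blast
  have img: "f ` T \<subseteq> nonempty_closed X"
  proof
    fix Y assume "Y \<in> f ` T"
    then obtain x where x: "x \<in> T" "Y = f x" by blast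
    then have "x \<in> Y" unfolding f_def T_def using closure_of_subset[of "{x}" X] by blast
    then show "Y \<in> nonempty_closed X" unfolding nonempty_closed_def using x(2) closedin_closure_of[of X "{x}"] unfolding f_def by blast
  qed
  define g where "g = inv_into T f"
  have pre: "{x \<in> T. f x \<in> zar_basic X \<Omega>} = T - \<Omega>" if "qc_open X \<Omega>" for \<Omega>
  proof -
    have o: "openin X \<Omega>" using that qc_open_def by blast
    show ?thesis using img cl_meet[OF o] unfolding zar_basic_def f_def T_def by auto
  qed
  have c1: "continuous_map (inverse_topology X) (zariski_closed_sets X) f"
    unfolding zariski_closed_sets_def
  proof (rule continuous_on_generated_topo)
    fix U assume "U \<in> {zar_basic X \<Omega> | \<Omega>. qc_open X \<Omega>}"
    then obtain \<Omega> where U: "U = zar_basic X \<Omega>" and q: "qc_open X \<Omega>" by auto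
    have "f -` U \<inter> topspace (inverse_topology X) = T - \<Omega>"
      using pre[OF q] topspace_inv[of X] U T_def by auto
    moreover have "openin (inverse_topology X) (T - \<Omega>)"
      unfolding inverse_topology_def T_def using q by (intro topology_generated_by_Basis) blast
    ultimately show "openin (inverse_topology X) (f -` U \<inter> topspace (inverse_topology X))" by simp
  next
    show "f ` topspace (inverse_topology X) \<subseteq> \<Union> {zar_basic X \<Omega> | \<Omega>. qc_open X \<Omega>}"
    proof -
      have e: "\<Union> {zar_basic X \<Omega> | \<Omega>. qc_open X \<Omega>} = nonempty_closed X"
        using topspace_zar[of X] unfolding zariski_closed_sets_def
        by (simp only: topology_generated_by_topspace)
      show ?thesis unfolding e topspace_inv T_def[symmetric] by (rule img)
    qed
  qed
  have tsub: "topspace (subtopology (zariski_closed_sets X) (f ` T)) = f ` T"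
    using img topspace_zar[of X] by auto
  have c2: "continuous_map (subtopology (zariski_closed_sets X) (f ` T)) (inverse_topology X) g"
    unfolding inverse_topology_def
  proof (rule continuous_on_generated_topo)
    fix U assume "U \<in> {topspace X - U | U. qc_open X U}"
    then obtain \<Omega> where U: "U = T - \<Omega>" and q: "qc_open X \<Omega>" unfolding T_def by auto
    have "g -` U \<inter> f ` T = zar_basic X \<Omega> \<inter> f ` T"
    proof -
      have "y \<in> g -` U \<longleftrightarrow> y \<in> zar_basic X \<Omega>" if "y \<in> f ` T" for y
      proof -
        obtain x where x: "x \<in> T" "y = f x" using \<open>y \<in> f ` T\<close> by blast
        have "g y = x" using x inj unfolding g_def by simp
        then show ?thesis using pre[OF q] x U by auto
      qed
      then show ?thesis by blast
    qed
    moreover have "openin (subtopology (zariski_closed_sets X) (f ` T)) (zar_basic X \<Omega> \<inter> f ` T)"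
      unfolding openin_subtopology zariski_closed_sets_def
      using q by (intro exI[of _ "zar_basic X \<Omega>"] conjI topology_generated_by_Basis) blast+
    ultimately show "openin (subtopology (zariski_closed_sets X) (f ` T))
        (g -` U \<inter> topspace (subtopology (zariski_closed_sets X) (f ` T)))"
      using tsub by simp
  next
    show "g ` topspace (subtopology (zariski_closed_sets X) (f ` T)) \<subseteq> \<Union> {topspace X - U | U. qc_open X U}"
    proof -
      have "qc_open X {}" unfolding qc_open_def by simp
      then have "T \<in> {topspace X - U | U. qc_open X U}" unfolding T_def by blast
      moreover have "g ` (f ` T) \<subseteq> T"
      proof
        fix z assume "z \<in> g ` f ` T"
        then obtain x where x: "x \<in> T" "z = g (f x)" by blast
        then have "z = x" using inj unfolding g_def by simp
        then show "z \<in> T" using x by simp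
      qed
      ultimately show ?thesis using tsub by auto
    qed
  qed
  have "homeomorphic_maps (inverse_topology X) (subtopology (zariski_closed_sets X) (f ` T)) f g"
    unfolding homeomorphic_maps_def
  proof (intro conjI)
    show "continuous_map (inverse_topology X) (subtopology (zariski_closed_sets X) (f ` T)) f"
      using c1 topspace_inv[of X] unfolding continuous_map_in_subtopology T_def by auto
    show "continuous_map (subtopology (zariski_closed_sets X) (f ` T)) (inverse_topology X) g"
      by (rule c2)
    show "\<forall>x\<in>topspace (inverse_topology X). g (f x) = x"
      using inj topspace_inv[of X] unfolding g_def T_def by auto
    show "\<forall>y\<in>topspace (subtopology (zariski_closed_sets X) (f ` T)). f (g y) = y"
      using tsub unfolding g_def by (metis f_inv_into_f)
  qed
  then show ?thesis
    unfolding embedding_map_def homeomorphic_map_maps f_def[symmetric]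
    using topspace_inv[of X] T_def by auto
qed

end
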